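(* Let $\mathbf c$ be a cluster in $\mathrm{CEG}(\mathcal Q)$ and let $i\neq j$ be vertices of $Q_{\mathbf c}$, with local twists $t_i,t_j$ at $\mathbf c$. If there is no arrow between $i$ and $j$ in $Q_{\mathbf c}$, then $t_it_j=t_jt_i$ in $\pi_1(\mathrm{ceg}(\mathcal Q),\mathbf c)$. If there is exactly one arrow between $i$ and $j$, then $t_it_jt_i=t_jt_it_j$ in $\pi_1(\mathrm{ceg}(\mathcal Q),\mathbf c)$.
   Context: Let $(Q,W)$ be a non-degenerate quiver with potential: $Q$ has no loops or oriented 2-cycles and every quiver with potential obtained from it by iterated Derksen–Weyman–Zelevinsky mutation again has none (so underlying quivers change by ordinary quiver mutation). Let $\Gamma=\Gamma(Q,W)$ be its Ginzburg dg algebra (degree 3, assumed Jacobi-finite) and $\mathcal C(\Gamma)=\operatorname{per}\Gamma/D_{fd}(\Gamma)$ its (Amiot) cluster category. A cluster is a cluster tilting set in $\mathcal C(\Gamma)$; each object of a cluster can be mutated; $Q_{\mathbf c}$ denotes the Gabriel quiver of $\operatorname{End}(\bigoplus_{M\in\mathbf c}M)$, whose vertices are the objects of $\mathbf c$, and mutation of clusters induces quiver mutation. The canonical cluster $\mathbf c_\Gamma$ is the image of the indecomposable summands of $\Gamma$ ($Q_{\mathbf c_\Gamma}=Q$). Let $\mathcal Q$ be the mutation class of $(Q,W)$. The unoriented cluster exchange graph $\underline{\mathrm{CEG}}(\mathcal Q)$ has vertices the clusters reachable from $\mathbf c_\Gamma$ by iterated mutation and edges the mutations; the oriented cluster exchange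 graph $\mathrm{CEG}(\mathcal Q)$ replaces each edge $\mathbf c - \mu_i\mathbf c$ by the two oriented edges $\mathbf c\to\mu_i\mathbf c$ and $\mu_i\mathbf c\to\mathbf c$ (forward mutations). Paths are composed left to right. The local twist $t_i$ at $\mathbf c$ (for a vertex $i$ of $Q_{\mathbf c}$) is the loop $\mathbf c\to\mu_i\mathbf c\to\mathbf c$ composed of the two forward mutations of the edge $\mu_i$. The cluster exchange groupoid $\mathrm{ceg}(\mathcal Q)$ is the quotient of the path groupoid of $\mathrm{CEG}(\mathcal Q)$ (objects the vertices; morphisms generated by the edges and their formal inverses) by the following relations, imposed for every cluster $\mathbf c$ and every ordered pair of distinct vertices $i,j$ of $Q_{\mathbf c}$ with no arrow from $i$ to $j$. Put $\mathbf c'=\mu_j\mathbf c$ and consider the path $\mu_i\mathbf c - \mathbf c - \mathbf c' - \mu_i\mathbf c'$ in $\underline{\mathrm{CEG}}$; write $x$ for each forward mutation in the direction $\mu_i\mathbf c\to\mathbf c\to\mathbf c'\to\mu_i\mathbf c'$ and $y$ for each forward mutation in the opposite direction (so at $\mathbf c$, $t_i=yx$ and $t_j=xy$). (1) Hexagonal relation: $x^2y=yx^2$ (as morphisms $\mathbf c\to\mathbf c'$). (2) If there is also no arrow from $j$ to $i$, the clusters $\mathbf c,\mu_j\mathbf c,\mu_i\mu_j\mathbf c=\mu_j\mu_i\mathbf c,\mu_i\mathbf c$ form a 4-cycle; labelling by $x$ the forward mutations around it in the direction starting $\mathbf c\to\mu_j\mathbf c$ and by $y$ those in the other direction, impose $x^2=y^2$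 (paths from $\mathbf c$). (3) If there is exactly one arrow from $j$ to $i$, the clusters obtained from $\mathbf c$ by alternately mutating at $i$ and $j$ form a 5-cycle; with the analogous labelling impose $x^2=y^3$ (paths from $\mathbf c$). *)

theory Defs
  imports Main
begin

text \<open>Abstract rendering of the cluster exchange graph of the Amiot cluster category
  of a non-degenerate Jacobi-finite quiver with potential.  Objects of the cluster
  category have type 'o; a cluster is a set of objects.
  mut c i   : the cluster obtained from c by mutating the object i (for i in c);
  arr c a b : number of arrows from a to b in the Gabriel quiver Q_c;
  c0        : the canonical cluster.\<close>

datatype 'o letter = Fwd "'o set" 'o | Inv "'o set" 'o

inductive_set reachable :: "('o set \<Rightarrow> 'o \<Rightarrow> 'o set) \<Rightarrow> 'o set \<Rightarrow> 'o set set"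
  for mut c0 where
  base: "c0 \<in> reachable mut c0"
| step: "c \<in> reachable mut c0 \<Longrightarrow> i \<in> c \<Longrightarrow> mut c i \<in> reachable mut c0"

definition skew :: "('o set \<Rightarrow> 'o \<Rightarrow> 'o \<Rightarrow> nat) \<Rightarrow> 'o set \<Rightarrow> 'o \<Rightarrow> 'o \<Rightarrow> int" where
  "skew arr c a b = int (arr c a b) - int (arr c b a)"

text \<open>Properties of the exchange graph of C(Gamma) stated in the context:
  clusters are finite, Q_c has no loops / 2-cycles (non-degeneracy), mutation replaces
  exactly one object by a new one and is involutive, mutation of clusters induces
  Fomin--Zelevinsky quiver mutation, commuting mutations give a 4-cycle, and one arrow
  j -> i gives the 5-cycle.\<close>
definition cluster_structure ::
  "('o set \<Rightarrow> 'o \<Rightarrow> 'o set) \<Rightarrow> ('o set \<Rightarrow> 'o \<Rightarrow> 'o \<Rightarrow> nat) \<Rightarrow> 'o set \<Rightarrow> bool" where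
  "cluster_structure mut arr c0 \<longleftrightarrow>
    (\<forall>c \<in> reachable mut c0.
       finite c
     \<and> (\<forall>a. arr c a a = 0)
     \<and> (\<forall>a b. arr c a b = 0 \<or> arr c b a = 0)
     \<and> (\<forall>a b. arr c a b \<noteq> 0 \<longrightarrow> a \<in> c \<and> b \<in> c)
     \<and> (\<forall>i \<in> c. \<exists>k. k \<notin> c \<and> mut c i = insert k (c - {i}) \<and> mut (mut c i) k = c
           \<and> (\<forall>a \<in> c - {i}. arr (mut c i) k a = arr c a i \<and> arr (mut c i) a k = arr c i a)
           \<and> (\<forall>a \<in> c - {i}. \<forall>b \<in> c - {i}.
                 skew arr (mut c i) a b = skew arr c a b
                   + int (arr c a i) * int (arr c i b) - int (arr c b i) * int (arr c i a)))
     \<and> (\<forall>i \<in> c. \<forall>j \<in> c. i \<noteq> j \<and> arr c i j = 0 \<and> arr c j i = 0 \<longrightarrow>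
            mut (mut c i) j = mut (mut c j) i)
     \<and> (\<forall>i \<in> c. \<forall>j \<in> c. i \<noteq> j \<and> arr c j i = 1 \<and> arr c i j = 0 \<longrightarrow>
            (\<exists>k \<in> mut (mut c i) j. mut (mut (mut c i) j) k = mut (mut c j) i)))"

text \<open>Forward mutation edges: Fwd c i is the oriented edge c -> mut c i;
  Inv c i is its formal inverse.\<close>
definition edge_to :: "('o set \<Rightarrow> 'o \<Rightarrow> 'o set) \<Rightarrow> 'o set \<Rightarrow> 'o set \<Rightarrow> 'o letter" where
  "edge_to mut x y = Fwd x (SOME k. k \<in> x \<and> mut x k = y)"

fun lsrc :: "('o set \<Rightarrow> 'o \<Rightarrow> 'o set) \<Rightarrow> 'o letter \<Rightarrow> 'o set" where
  "lsrc mut (Fwd c i) = c"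
| "lsrc mut (Inv c i) = mut c i"

fun ltgt :: "('o set \<Rightarrow> 'o \<Rightarrow> 'o set) \<Rightarrow> 'o letter \<Rightarrow> 'o set" where
  "ltgt mut (Fwd c i) = mut c i"
| "ltgt mut (Inv c i) = c"

fun lok :: "('o set \<Rightarrow> 'o \<Rightarrow> 'o set) \<Rightarrow> 'o set \<Rightarrow> 'o letter \<Rightarrow> bool" where
  "lok mut c0 (Fwd c i) = (c \<in> reachable mut c0 \<and> i \<in> c)"
| "lok mut c0 (Inv c i) = (c \<in> reachable mut c0 \<and> i \<in> c)"

fun linv :: "'o letter \<Rightarrow> 'o letter" where
  "linv (Fwd c i) = Inv c i"
| "linv (Inv c i) = Fwd c i"

text \<open>Paths in the path groupoid of CEG, composed left to right.\<close>
inductive vpath :: "('o set \<Rightarrow> 'o \<Rightarrow> 'o set) \<Rightarrow> 'o set \<Rightarrow> 'o set \<Rightarrow> 'o letter list \<Rightarrow> 'o set \<Rightarrow> bool"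
  for mut c0 where
  nil: "x \<in> reachable mut c0 \<Longrightarrow> vpath mut c0 x [] x"
| cons: "lok mut c0 a \<Longrightarrow> lsrc mut a = x \<Longrightarrow> vpath mut c0 (ltgt mut a) p y \<Longrightarrow> vpath mut c0 x (a # p) y"

text \<open>Defining relations of ceg: gen_rel x y p q means p = q imposed as morphisms x -> y.\<close>
inductive gen_rel :: "('o set \<Rightarrow> 'o \<Rightarrow> 'o set) \<Rightarrow> ('o set \<Rightarrow> 'o \<Rightarrow> 'o \<Rightarrow> nat) \<Rightarrow> 'o set \<Rightarrow>
    'o set \<Rightarrow> 'o set \<Rightarrow> 'o letter list \<Rightarrow> 'o letter list \<Rightarrow> bool"
  for mut arr c0 where
  hexagon: "c \<in> reachable mut c0 \<Longrightarrow> i \<in> c \<Longrightarrow> j \<in> c \<Longrightarrow> i \<noteq> j \<Longrightarrow> arr c i j = 0 \<Longrightarrow>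
    gen_rel mut arr c0 c (mut c j)
      [Fwd c j, Fwd (mut c j) i, edge_to mut (mut (mut c j) i) (mut c j)]
      [Fwd c i, edge_to mut (mut c i) c, Fwd c j]"
| square: "c \<in> reachable mut c0 \<Longrightarrow> i \<in> c \<Longrightarrow> j \<in> c \<Longrightarrow> i \<noteq> j \<Longrightarrow> arr c i j = 0 \<Longrightarrow>
    arr c j i = 0 \<Longrightarrow>
    gen_rel mut arr c0 c (mut (mut c j) i)
      [Fwd c j, Fwd (mut c j) i]
      [Fwd c i, Fwd (mut c i) j]"
| pentagon: "c \<in> reachable mut c0 \<Longrightarrow> i \<in> c \<Longrightarrow> j \<in> c \<Longrightarrow> i \<noteq> j \<Longrightarrow> arr c i j = 0 \<Longrightarrow>
    arr c j i = 1 \<Longrightarrow>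
    gen_rel mut arr c0 c (mut (mut c j) i)
      [Fwd c j, Fwd (mut c j) i]
      [Fwd c i, Fwd (mut c i) j, edge_to mut (mut (mut c i) j) (mut (mut c j) i)]"

inductive ceg_eq :: "('o set \<Rightarrow> 'o \<Rightarrow> 'o set) \<Rightarrow> ('o set \<Rightarrow> 'o \<Rightarrow> 'o \<Rightarrow> nat) \<Rightarrow> 'o set \<Rightarrow>
    'o set \<Rightarrow> 'o set \<Rightarrow> 'o letter list \<Rightarrow> 'o letter list \<Rightarrow> bool"
  for mut arr c0 where
  refl: "vpath mut c0 x p y \<Longrightarrow> ceg_eq mut arr c0 x y p p"
| sym: "ceg_eq mut arr c0 x y p q \<Longrightarrow> ceg_eq mut arr c0 x y q p"
| trans: "ceg_eq mut arr c0 x y p q \<Longrightarrow> ceg_eq mut arr c0 x y q r \<Longrightarrow> ceg_eq mut arr c0 x y p r"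
| cancel: "vpath mut c0 x [a] y \<Longrightarrow> ceg_eq mut arr c0 x x [a, linv a] []"
| gen: "gen_rel mut arr c0 x y p q \<Longrightarrow> vpath mut c0 x p y \<Longrightarrow> vpath mut c0 x q y \<Longrightarrow>
    ceg_eq mut arr c0 x y p q"
| ctx: "ceg_eq mut arr c0 u v p q \<Longrightarrow> vpath mut c0 x a u \<Longrightarrow> vpath mut c0 v b y \<Longrightarrow>
    ceg_eq mut arr c0 x y (a @ p @ b) (a @ q @ b)"

definition twist :: "('o set \<Rightarrow> 'o \<Rightarrow> 'o set) \<Rightarrow> 'o set \<Rightarrow> 'o \<Rightarrow> 'o letter list" where
  "twist mut c i = [Fwd c i, edge_to mut (mut c i) c]"

end

theory Submission
  imports Defs
begin

locale CS =
  fixes mut :: "'o set \<Rightarrow> 'o \<Rightarrow> 'o set" and arr :: "'o set \<Rightarrow> 'o \<Rightarrow> 'o \<Rightarrow> nat" and c0 :: "'o set"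
  assumes cs: "cluster_structure mut arr c0"
begin

abbreviation RR where "RR \<equiv> reachable mut c0"
abbreviation EE where "EE \<equiv> ceg_eq mut arr c0"
abbreviation VV where "VV \<equiv> vpath mut c0"

lemma reach_mut: "d \<in> RR \<Longrightarrow> a \<in> d \<Longrightarrow> mut d a \<in> RR"
  by (rule reachable.step)

lemma newobj:
  assumes "d \<in> RR" "a \<in> d"
  obtains k d' where "mut d a = d'" "k \<notin> d" "d' = insert k (d - {a})" "mut d' k = d"
   "\<forall>b \<in> d - {a}. arr d' k b = arr d b a \<and> arr d' b k = arr d a b"
proof -
  have H: "\<forall>i \<in> d. \<exists>k. k \<notin> d \<and> mut d i = insert k (d - {i}) \<and> mut (mut d i) k = d
           \<and> (\<forall>a \<in> d - {i}. arr (mut d i) k a = arr d a i \<and> arr (mut d i) a k = arr d i a)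
           \<and> (\<forall>a \<in> d - {i}. \<forall>b \<in> d - {i}.
                 skew arr (mut d i) a b = skew arr d a b
                   + int (arr d a i) * int (arr d i b) - int (arr d b i) * int (arr d i a))"
    using bspec[OF cs[unfolded cluster_structure_def] assms(1)] by (elim conjE)
  obtain k where "k \<notin> d" "mut d a = insert k (d - {a})" "mut (mut d a) k = d"
    "\<forall>b \<in> d - {a}. arr (mut d a) k b = arr d b a \<and> arr (mut d a) b k = arr d a b"
    using bspec[OF H assms(2)] by (elim exE conjE)
  then show ?thesis using that by blast
qed

lemma not_in_mut: "d \<in> RR \<Longrightarrow> a \<in> d \<Longrightarrow> a \<notin> mut d a"
  by (erule newobj, assumption) auto

lemma mut_inj: "d \<in> RR \<Longrightarrow> a \<in> d \<Longrightarrow> b \<in> d \<Longrightarrow> mut d a = mut d b \<Longrightarrow> a = b"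
proof (rule ccontr)
  assume h: "d \<in> RR" "a \<in> d" "b \<in> d" "mut d a = mut d b" "a \<noteq> b"
  obtain k d' where o: "mut d b = d'" "k \<notin> d" "d' = insert k (d - {b})" "mut d' k = d"
   "\<forall>x \<in> d - {b}. arr d' k x = arr d x b \<and> arr d' x k = arr d b x"
    by (rule newobj[OF h(1) h(3)])
  have "a \<in> mut d b" using h(2,5) o(1,3) by simp
  then show False using not_in_mut[OF h(1) h(2)] h(4) by simp
qed

lemma edge_to_eq: "d \<in> RR \<Longrightarrow> a \<in> d \<Longrightarrow> edge_to mut d (mut d a) = Fwd d a"
  unfolding edge_to_def
  by (rule arg_cong[where f="Fwd d"], rule some_equality) (auto dest: mut_inj)

lemma edge_to_eq': "d \<in> RR \<Longrightarrow> a \<in> d \<Longrightarrow> mut d a = e \<Longrightarrow> edge_to mut d e = Fwd d a"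
  using edge_to_eq by blast

lemma back_edge:
  assumes "d \<in> RR" "a \<in> d"
  obtains k where "k \<in> mut d a" "mut (mut d a) k = d" "edge_to mut (mut d a) d = Fwd (mut d a) k"
proof -
  obtain k d' where h: "mut d a = d'" "k \<notin> d" "d' = insert k (d - {a})" "mut d' k = d"
   "\<forall>x \<in> d - {a}. arr d' k x = arr d x a \<and> arr d' x k = arr d a x"
    by (rule newobj[OF assms])
  have "mut d a \<in> RR" using assms reach_mut by blast
  moreover have "k \<in> mut d a" using h by auto
  ultimately show ?thesis using that h edge_to_eq[of "mut d a" k] by auto
qed

lemma V_nil_iff: "VV x [] y \<longleftrightarrow> x \<in> RR \<and> y = x"
  by (auto intro: vpath.nil elim: vpath.cases)

lemma V_Fwd_iff: "VV x (Fwd d a # p) y \<longleftrightarrow> x = d \<and> d \<in> RR \<and> a \<in> d \<and> VV (mut d a) p y"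
  by (auto intro: vpath.cons elim: vpath.cases)

lemma V_Inv_iff: "VV x (Inv d a # p) y \<longleftrightarrow> x = mut d a \<and> d \<in> RR \<and> a \<in> d \<and> VV d p y"
  by (auto intro: vpath.cons elim: vpath.cases)

lemma V_back_iff: "d \<in> RR \<Longrightarrow> a \<in> d \<Longrightarrow>
   VV x (edge_to mut (mut d a) d # p) y \<longleftrightarrow> x = mut d a \<and> VV d p y"
  by (rule back_edge, assumption+) (auto simp: V_Fwd_iff reach_mut)

lemma V_start: "VV x p y \<Longrightarrow> x \<in> RR"
proof (induction rule: vpath.induct)
  case (cons a x p y) then show ?case by (cases a) (auto intro: reach_mut)
qed auto

lemma V_end: "VV x p y \<Longrightarrow> y \<in> RR"
  by (induction rule: vpath.induct) auto

lemma V_append: "VV x p y \<Longrightarrow> VV y q z \<Longrightarrow> VV x (p @ q) z"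
  by (induction rule: vpath.induct) (auto intro: vpath.cons)

lemma V_append_D: "VV x (p @ q) z \<Longrightarrow> \<exists>y. VV x p y \<and> VV y q z"
proof (induction p arbitrary: x)
  case Nil then show ?case using V_start[OF Nil.prems] by (auto intro: vpath.nil)
next
  case (Cons a p)
  from Cons.prems have "lok mut c0 a" "lsrc mut a = x" "VV (ltgt mut a) (p @ q) z"
    by (auto elim: vpath.cases)
  then show ?case using Cons.IH by (blast intro: vpath.cons)
qed

lemma V_linv: "VV x [a] y \<Longrightarrow> VV y [linv a] x"
  by (cases a) (auto simp: V_Fwd_iff V_Inv_iff V_nil_iff reach_mut)

lemma E_vpath: "EE x y p q \<Longrightarrow> VV x p y \<and> VV x q y"
proof (induction rule: ceg_eq.induct)
  case (cancel x a y)
  have "VV y [linv a] x" using V_linv[OF cancel] .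
  then have "VV x ([a] @ [linv a]) x" using V_append[OF cancel] by blast
  then show ?case using V_start[OF cancel] by (auto intro: vpath.nil)
next
  case (ctx u v p q x a b y) then show ?case by (auto intro: V_append)
qed auto

lemma E_ctx': "EE u v p q \<Longrightarrow> VV x a u \<Longrightarrow> VV v b y \<Longrightarrow> P = a @ p @ b \<Longrightarrow> Q = a @ q @ b \<Longrightarrow> EE x y P Q"
  using ceg_eq.ctx by blast

lemma E_gen': "gen_rel mut arr c0 x y p q \<Longrightarrow> VV x p y \<Longrightarrow> VV x q y \<Longrightarrow> EE x y p q"
  by (rule ceg_eq.gen)

lemma E_rcancel:
  assumes e: "EE x y (p @ [e]) (q @ [e])" and ve: "VV z [e] y"
  shows "EE x z p q"
proof -
  obtain z' where z': "VV x p z'" "VV z' [e] y" using V_append_D E_vpath[OF e] by blast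
  obtain z'' where z'': "VV x q z''" "VV z'' [e] y" using V_append_D E_vpath[OF e] by blast
  have zz: "z' = z" "z'' = z" using z' z'' ve by (cases e; auto simp: V_Fwd_iff V_Inv_iff)+
  have li: "VV y [linv e] z" using V_linv[OF ve] .
  have 1: "EE x z (p @ [e, linv e]) (q @ [e, linv e])"
    by (rule E_ctx'[OF e, of x "[]" "[linv e]"]) (auto intro: vpath.nil V_start[OF z'(1)] li)
  have c: "EE z z [e, linv e] []" using ceg_eq.cancel[OF ve] .
  have 2: "EE x z (p @ [e, linv e]) p"
    by (rule E_ctx'[OF c, of x p "[]"]) (use z' zz in \<open>auto intro: vpath.nil V_end\<close>)
  have 3: "EE x z (q @ [e, linv e]) q"
    by (rule E_ctx'[OF c, of x q "[]"]) (use z'' zz in \<open>auto intro: vpath.nil V_end\<close>)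
  show ?thesis using 1 2 3 by (meson ceg_eq.sym ceg_eq.trans)
qed


lemma pent_ax: "c \<in> RR \<Longrightarrow> i \<in> c \<Longrightarrow> j \<in> c \<Longrightarrow> i \<noteq> j \<Longrightarrow> arr c j i = 1 \<Longrightarrow> arr c i j = 0 \<Longrightarrow>
  \<exists>m \<in> mut (mut c i) j. mut (mut (mut c i) j) m = mut (mut c j) i"
proof -
  assume h: "c \<in> RR" "i \<in> c" "j \<in> c" "i \<noteq> j" "arr c j i = 1" "arr c i j = 0"
  have H: "\<forall>i \<in> c. \<forall>j \<in> c. i \<noteq> j \<and> arr c j i = 1 \<and> arr c i j = 0 \<longrightarrow>
            (\<exists>k \<in> mut (mut c i) j. mut (mut (mut c i) j) k = mut (mut c j) i)"
    using bspec[OF cs[unfolded cluster_structure_def] h(1)] by (elim conjE)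
  show ?thesis using H h by blast
qed

lemma commute:
  assumes c: "c \<in> RR" and ij: "i \<in> c" "j \<in> c" "i \<noteq> j" and a0: "arr c i j = 0" "arr c j i = 0"
  shows "EE c c (twist mut c i @ twist mut c j) (twist mut c j @ twist mut c i)"
proof -
  obtain k c1 where k: "mut c j = c1" "k \<notin> c" "c1 = insert k (c - {j})" "mut c1 k = c"
     "\<forall>b \<in> c - {j}. arr c1 k b = arr c b j \<and> arr c1 b k = arr c j b"
    by (rule newobj[OF c ij(2)])
  have c1R: "c1 \<in> RR" using reach_mut c ij k(1) by blast
  have kc1: "k \<in> c1" "i \<in> c1" "i \<noteq> k" using k ij by auto
  have ej: "edge_to mut c1 c = Fwd c1 k" using edge_to_eq'[OF c1R kc1(1) k(4)] .
  have aik: "arr c1 i k = 0" using k(5) ij a0 by auto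
  have H1: "gen_rel mut arr c0 c c1 [Fwd c j, Fwd c1 i, edge_to mut (mut c1 i) c1] [Fwd c i, edge_to mut (mut c i) c, Fwd c j]"
    using gen_rel.hexagon[where mut=mut and arr=arr and ?c0.0=c0, OF c ij(1,2,3) a0(1)] k(1) by simp
  have H2: "gen_rel mut arr c0 c1 c [Fwd c1 k, Fwd c i, edge_to mut (mut c i) c] [Fwd c1 i, edge_to mut (mut c1 i) c1, Fwd c1 k]"
    using gen_rel.hexagon[where mut=mut and arr=arr and ?c0.0=c0, OF c1R kc1(2) kc1(1) kc1(3) aik] k(4) by simp
  note vs = V_Fwd_iff V_nil_iff V_back_iff c c1R ij kc1 k(1) k(4)
  have E1: "EE c c1 [Fwd c j, Fwd c1 i, edge_to mut (mut c1 i) c1] [Fwd c i, edge_to mut (mut c i) c, Fwd c j]"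
    by (rule E_gen'[OF H1]) (simp_all add: vs)
  have E2: "EE c1 c [Fwd c1 k, Fwd c i, edge_to mut (mut c i) c] [Fwd c1 i, edge_to mut (mut c1 i) c1, Fwd c1 k]"
    by (rule E_gen'[OF H2]) (simp_all add: vs)
  have L: "EE c c [Fwd c i, edge_to mut (mut c i) c, Fwd c j, Fwd c1 k] [Fwd c j, Fwd c1 i, edge_to mut (mut c1 i) c1, Fwd c1 k]"
    by (rule E_ctx'[OF ceg_eq.sym[OF E1], where a="[]" and b="[Fwd c1 k]"]) (simp_all add: vs)
  have R: "EE c c [Fwd c j, Fwd c1 k, Fwd c i, edge_to mut (mut c i) c] [Fwd c j, Fwd c1 i, edge_to mut (mut c1 i) c1, Fwd c1 k]"
    by (rule E_ctx'[OF E2, where a="[Fwd c j]" and b="[]"]) (simp_all add: vs)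
  show ?thesis unfolding twist_def using ceg_eq.trans[OF L ceg_eq.sym[OF R]] by (simp add: k(1) ej)
qed


lemma braid:
  assumes c: "c \<in> RR" and ij: "i \<in> c" "j \<in> c" "i \<noteq> j" and a: "arr c i j = 0" "arr c j i = 1"
  shows "EE c c (twist mut c i @ twist mut c j @ twist mut c i) (twist mut c j @ twist mut c i @ twist mut c j)"
proof -
  obtain k c1 where k: "mut c j = c1" "k \<notin> c" "c1 = insert k (c - {j})" "mut c1 k = c"
     "\<forall>b \<in> c - {j}. arr c1 k b = arr c b j \<and> arr c1 b k = arr c j b"
    by (rule newobj[OF c ij(2)])
  obtain k4 c4 where k4: "mut c i = c4" "k4 \<notin> c" "c4 = insert k4 (c - {i})" "mut c4 k4 = c"
     "\<forall>b \<in> c - {i}. arr c4 k4 b = arr c b i \<and> arr c4 b k4 = arr c i b"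
    by (rule newobj[OF c ij(1)])
  have c1R: "c1 \<in> RR" and c4R: "c4 \<in> RR" using reach_mut c ij k(1) k4(1) by blast+
  have ic1: "i \<in> c1" and jc4: "j \<in> c4" using k k4 ij by auto
  obtain k2 c2 where k2: "mut c1 i = c2" "k2 \<notin> c1" "c2 = insert k2 (c1 - {i})" "mut c2 k2 = c1"
     "\<forall>b \<in> c1 - {i}. arr c2 k2 b = arr c1 b i \<and> arr c2 b k2 = arr c1 i b"
    by (rule newobj[OF c1R ic1])
  obtain k3 c3 where k3: "mut c4 j = c3" "k3 \<notin> c4" "c3 = insert k3 (c4 - {j})" "mut c3 k3 = c4"
     "\<forall>b \<in> c4 - {j}. arr c3 k3 b = arr c4 b j \<and> arr c3 b k3 = arr c4 j b"
    by (rule newobj[OF c4R jc4])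
  have c2R: "c2 \<in> RR" and c3R: "c3 \<in> RR" using reach_mut c1R c4R ic1 jc4 k2(1) k3(1) by blast+
  obtain m where m: "m \<in> c3" "mut c3 m = c2"
    using pent_ax[OF c ij a(2) a(1)] k(1) k4(1) k2(1) k3(1) by blast
  have kin: "k \<in> c1" "k \<noteq> i" "k \<noteq> j" "k4 \<in> c4" "k4 \<noteq> i" "k4 \<noteq> j" "k2 \<in> c2" "k3 \<in> c3"
      "k4 \<in> c3" "k \<in> c2" "k3 \<noteq> k4"
    using k k4 k2 k3 ij by auto
  have mc2: "m \<notin> c2" using not_in_mut[OF c3R m(1)] m(2) by simp
  have mcases: "m = k4 \<or> m = k3" using m(1) mc2 k3(3) k4(3) k2(3) k(3) by blast
  have e1: "edge_to mut c1 c = Fwd c1 k" using edge_to_eq'[OF c1R kin(1) k(4)] .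
  have e4: "edge_to mut c4 c = Fwd c4 k4" using edge_to_eq'[OF c4R kin(4) k4(4)] .
  have ec4: "edge_to mut c c4 = Fwd c i" using edge_to_eq'[OF c ij(1) k4(1)] .
  have ec1: "edge_to mut c c1 = Fwd c j" using edge_to_eq'[OF c ij(2) k(1)] .
  have tw: "twist mut c i = [Fwd c i, Fwd c4 k4]" "twist mut c j = [Fwd c j, Fwd c1 k]"
    unfolding twist_def using k(1) k4(1) e1 e4 by simp_all
  have aj4: "arr c4 k4 j = 1" "arr c4 j k4 = 0" using k4(5) ij a by auto
  show ?thesis
  proof (cases "m = k4")
    case True
    have mc3: "mut c3 k4 = c2" using m True by simp
    obtain n c2' where n: "mut c3 k4 = c2'" "n \<notin> c3" "c2' = insert n (c3 - {k4})" "mut c2' n = c3"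
     "\<forall>b \<in> c3 - {k4}. arr c2' n b = arr c3 b k4 \<and> arr c2' b n = arr c3 k4 b"
      by (rule newobj[OF c3R kin(9)])
    have nk: "n = k"
    proof (rule ccontr)
      assume nk: "n \<noteq> k"
      have "k \<in> c3 - {k4}" using nk n(1,3) mc3 kin(10) by auto
      then have kk3: "k = k3" using k3(3) k4(3) k(2) by auto
      have "k2 = n"
      proof (rule ccontr)
        assume "k2 \<noteq> n"
        then have "k2 \<in> c3 - {k4}" using n(1,3) mc3 kin(7) by auto
        then show False using k3(3) k4(3) k(3) kk3 k2(2) kin(1) by auto
      qed
      then have "c3 = c1" using n mc3 k2(4) by simp
      then have "k4 = k" using kin(9) k(3) k4(2) by auto
      then show False using kk3 kin(11) by simp
    qed
    have mc23: "mut c2 k = c3" using n nk mc3 by simp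
    have e3: "edge_to mut c3 c4 = Fwd c3 k3" using edge_to_eq'[OF c3R kin(8) k3(4)] .
    have e32: "edge_to mut c3 c2 = Fwd c3 k4" using edge_to_eq'[OF c3R kin(9) mc3] .
    have e23: "edge_to mut c2 c3 = Fwd c2 k" using edge_to_eq'[OF c2R kin(10) mc23] .
    have e43: "edge_to mut c4 c3 = Fwd c4 j" using edge_to_eq'[OF c4R jc4 k3(1)] .
    have a34: "arr c3 k4 k3 = 0" using k3(5) kin(4,6) aj4 by auto
    have a1: "arr c1 k i = 0" "arr c1 i k = 1" using k(5) ij a by auto
    have H4: "gen_rel mut arr c0 c4 c [Fwd c4 k4, Fwd c j, Fwd c1 k] [Fwd c4 j, Fwd c3 k3, Fwd c4 k4]"
      using gen_rel.hexagon[where mut=mut and arr=arr and ?c0.0=c0, OF c4R jc4 kin(4) kin(6)[symmetric] aj4(2)] k4(4) k(1) k3(1) e1 e3 by simp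
    have H3: "gen_rel mut arr c0 c3 c4 [Fwd c3 k3, Fwd c4 k4, Fwd c i] [Fwd c3 k4, Fwd c2 k, Fwd c3 k3]"
      using gen_rel.hexagon[where mut=mut and arr=arr and ?c0.0=c0, OF c3R kin(9) kin(8) kin(11)[symmetric] a34] k3(4) k4(4) ec4 mc3 e23 by simp
    have Pc: "gen_rel mut arr c0 c c2 [Fwd c j, Fwd c1 i] [Fwd c i, Fwd c4 j, Fwd c3 k4]"
      using gen_rel.pentagon[where mut=mut and arr=arr and ?c0.0=c0, OF c ij a] k(1) k2(1) k4(1) k3(1) e32 by simp
    have Pc1: "gen_rel mut arr c0 c1 c3 [Fwd c1 i, Fwd c2 k] [Fwd c1 k, Fwd c i, Fwd c4 j]"
      using gen_rel.pentagon[where mut=mut and arr=arr and ?c0.0=c0, OF c1R kin(1) ic1 kin(2) a1] k2(1) mc23 k(4) k4(1) e43 by simp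
    note vs = V_Fwd_iff V_nil_iff c c1R c2R c3R c4R ij ic1 jc4 kin k(1) k(4) k4(1) k4(4) k2(1) k3(1) k3(4) mc3 mc23
    have EH4: "EE c4 c [Fwd c4 k4, Fwd c j, Fwd c1 k] [Fwd c4 j, Fwd c3 k3, Fwd c4 k4]"
      by (rule E_gen'[OF H4]) (simp_all add: vs)
    have EH3: "EE c3 c4 [Fwd c3 k3, Fwd c4 k4, Fwd c i] [Fwd c3 k4, Fwd c2 k, Fwd c3 k3]"
      by (rule E_gen'[OF H3]) (simp_all add: vs)
    have EPc: "EE c c2 [Fwd c j, Fwd c1 i] [Fwd c i, Fwd c4 j, Fwd c3 k4]"
      by (rule E_gen'[OF Pc]) (simp_all add: vs)
    have EPc1: "EE c1 c3 [Fwd c1 i, Fwd c2 k] [Fwd c1 k, Fwd c i, Fwd c4 j]"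
      by (rule E_gen'[OF Pc1]) (simp_all add: vs)
    have L1: "EE c c [Fwd c i, Fwd c4 k4, Fwd c j, Fwd c1 k, Fwd c i, Fwd c4 k4]
                     [Fwd c i, Fwd c4 j, Fwd c3 k3, Fwd c4 k4, Fwd c i, Fwd c4 k4]"
      by (rule E_ctx'[OF EH4, where a="[Fwd c i]" and b="[Fwd c i, Fwd c4 k4]"]) (simp_all add: vs)
    have L2: "EE c c [Fwd c i, Fwd c4 j, Fwd c3 k3, Fwd c4 k4, Fwd c i, Fwd c4 k4]
                     [Fwd c i, Fwd c4 j, Fwd c3 k4, Fwd c2 k, Fwd c3 k3, Fwd c4 k4]"
      by (rule E_ctx'[OF EH3, where a="[Fwd c i, Fwd c4 j]" and b="[Fwd c4 k4]"]) (simp_all add: vs)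
    have L3: "EE c c [Fwd c j, Fwd c1 i, Fwd c2 k, Fwd c3 k3, Fwd c4 k4]
                     [Fwd c i, Fwd c4 j, Fwd c3 k4, Fwd c2 k, Fwd c3 k3, Fwd c4 k4]"
      by (rule E_ctx'[OF EPc, where a="[]" and b="[Fwd c2 k, Fwd c3 k3, Fwd c4 k4]"]) (simp_all add: vs)
    have R1: "EE c c [Fwd c j, Fwd c1 k, Fwd c i, Fwd c4 k4, Fwd c j, Fwd c1 k]
                     [Fwd c j, Fwd c1 k, Fwd c i, Fwd c4 j, Fwd c3 k3, Fwd c4 k4]"
      by (rule E_ctx'[OF EH4, where a="[Fwd c j, Fwd c1 k, Fwd c i]" and b="[]"]) (simp_all add: vs)
    have R2: "EE c c [Fwd c j, Fwd c1 i, Fwd c2 k, Fwd c3 k3, Fwd c4 k4]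
                     [Fwd c j, Fwd c1 k, Fwd c i, Fwd c4 j, Fwd c3 k3, Fwd c4 k4]"
      by (rule E_ctx'[OF EPc1, where a="[Fwd c j]" and b="[Fwd c3 k3, Fwd c4 k4]"]) (simp_all add: vs)
    have "EE c c [Fwd c i, Fwd c4 k4, Fwd c j, Fwd c1 k, Fwd c i, Fwd c4 k4]
                 [Fwd c j, Fwd c1 k, Fwd c i, Fwd c4 k4, Fwd c j, Fwd c1 k]"
      using L1 L2 L3 R1 R2 by (meson ceg_eq.sym ceg_eq.trans)
    then show ?thesis by (simp add: tw)
  next
    case False
    then have mk3: "m = k3" using mcases by simp
    have c24: "c2 = c4" using m k3(4) mk3 by simp
    have k4k: "k4 = k" using kin(10) c24 k4(3) k(2) by auto
    have k2j: "k2 = j" using c24 k2(3) jc4 k(3) kin(3) by auto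
    have c31: "c3 = c1" using k3(1) c24 k2(4) k2j by simp
    have eqs: "mut c j = c1" "mut c1 k = c" "mut c i = c4" "mut c4 k = c" "mut c1 i = c4" "mut c4 j = c1"
      using k(1) k(4) k4(1) k4(4) k4k k2(1) c24 k3(1) c31 by simp_all
    have kc4: "k \<in> c4" using kin(4) k4k by simp
    have e14: "edge_to mut c1 c4 = Fwd c1 i" using edge_to_eq'[OF c1R ic1 eqs(5)] .
    have aT: "arr c4 j k = 0" "arr c4 k j = 1" using aj4 k4k by simp_all
    have PA: "gen_rel mut arr c0 c c4 [Fwd c j, Fwd c1 i] [Fwd c i, Fwd c4 j, Fwd c1 i]"
      using gen_rel.pentagon[where mut=mut and arr=arr and ?c0.0=c0, OF c ij a] eqs e14 by simp
    have PC: "gen_rel mut arr c0 c4 c1 [Fwd c4 k, Fwd c j] [Fwd c4 j, Fwd c1 k, Fwd c j]"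
      using gen_rel.pentagon[where mut=mut and arr=arr and ?c0.0=c0, OF c4R jc4 kc4 kin(3)[symmetric] aT] eqs ec1 by simp
    note vs = V_Fwd_iff V_nil_iff c c1R c4R ij ic1 jc4 kin kc4 eqs
    have EPA: "EE c c4 ([Fwd c j] @ [Fwd c1 i]) ([Fwd c i, Fwd c4 j] @ [Fwd c1 i])"
      by (simp, rule E_gen'[OF PA]) (simp_all add: vs)
    have EPC: "EE c4 c1 ([Fwd c4 k] @ [Fwd c j]) ([Fwd c4 j, Fwd c1 k] @ [Fwd c j])"
      by (simp, rule E_gen'[OF PC]) (simp_all add: vs)
    have E1: "EE c c1 [Fwd c j] [Fwd c i, Fwd c4 j]"
      by (rule E_rcancel[OF EPA]) (simp add: vs)
    have E2: "EE c4 c [Fwd c4 k] [Fwd c4 j, Fwd c1 k]"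
      by (rule E_rcancel[OF EPC]) (simp add: vs)
    define W where "W = [Fwd c i, Fwd c4 j, Fwd c1 k, Fwd c i, Fwd c4 j, Fwd c1 k, Fwd c i, Fwd c4 j, Fwd c1 k]"
    have L1: "EE c c [Fwd c i, Fwd c4 k, Fwd c j, Fwd c1 k, Fwd c i, Fwd c4 k]
                     [Fwd c i, Fwd c4 j, Fwd c1 k, Fwd c j, Fwd c1 k, Fwd c i, Fwd c4 k]"
      by (rule E_ctx'[OF E2, where a="[Fwd c i]" and b="[Fwd c j, Fwd c1 k, Fwd c i, Fwd c4 k]"]) (simp_all add: vs)
    have L2: "EE c c [Fwd c i, Fwd c4 j, Fwd c1 k, Fwd c j, Fwd c1 k, Fwd c i, Fwd c4 k]
                     [Fwd c i, Fwd c4 j, Fwd c1 k, Fwd c i, Fwd c4 j, Fwd c1 k, Fwd c i, Fwd c4 k]"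
      by (rule E_ctx'[OF E1, where a="[Fwd c i, Fwd c4 j, Fwd c1 k]" and b="[Fwd c1 k, Fwd c i, Fwd c4 k]"]) (simp_all add: vs)
    have L3: "EE c c [Fwd c i, Fwd c4 j, Fwd c1 k, Fwd c i, Fwd c4 j, Fwd c1 k, Fwd c i, Fwd c4 k] W"
      unfolding W_def
      by (rule E_ctx'[OF E2, where a="[Fwd c i, Fwd c4 j, Fwd c1 k, Fwd c i, Fwd c4 j, Fwd c1 k, Fwd c i]" and b="[]"]) (simp_all add: vs)
    have R1: "EE c c [Fwd c j, Fwd c1 k, Fwd c i, Fwd c4 k, Fwd c j, Fwd c1 k]
                     [Fwd c i, Fwd c4 j, Fwd c1 k, Fwd c i, Fwd c4 k, Fwd c j, Fwd c1 k]"
      by (rule E_ctx'[OF E1, where a="[]" and b="[Fwd c1 k, Fwd c i, Fwd c4 k, Fwd c j, Fwd c1 k]"]) (simp_all add: vs)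
    have R2: "EE c c [Fwd c i, Fwd c4 j, Fwd c1 k, Fwd c i, Fwd c4 k, Fwd c j, Fwd c1 k]
                     [Fwd c i, Fwd c4 j, Fwd c1 k, Fwd c i, Fwd c4 j, Fwd c1 k, Fwd c j, Fwd c1 k]"
      by (rule E_ctx'[OF E2, where a="[Fwd c i, Fwd c4 j, Fwd c1 k, Fwd c i]" and b="[Fwd c j, Fwd c1 k]"]) (simp_all add: vs)
    have R3: "EE c c [Fwd c i, Fwd c4 j, Fwd c1 k, Fwd c i, Fwd c4 j, Fwd c1 k, Fwd c j, Fwd c1 k] W"
      unfolding W_def
      by (rule E_ctx'[OF E1, where a="[Fwd c i, Fwd c4 j, Fwd c1 k, Fwd c i, Fwd c4 j, Fwd c1 k]" and b="[Fwd c1 k]"]) (simp_all add: vs)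
    have "EE c c [Fwd c i, Fwd c4 k, Fwd c j, Fwd c1 k, Fwd c i, Fwd c4 k]
                 [Fwd c j, Fwd c1 k, Fwd c i, Fwd c4 k, Fwd c j, Fwd c1 k]"
      using L1 L2 L3 R1 R2 R3 by (meson ceg_eq.sym ceg_eq.trans)
    then show ?thesis by (simp add: tw k4k)
  qed
qed

end

theorem mainTheorem1:
  fixes mut :: "'o set \<Rightarrow> 'o \<Rightarrow> 'o set"
    and arr :: "'o set \<Rightarrow> 'o \<Rightarrow> 'o \<Rightarrow> nat"
    and c0 c :: "'o set" and i j :: 'o
  assumes "cluster_structure mut arr c0"
    and "c \<in> reachable mut c0"
    and "i \<in> c" and "j \<in> c" and "i \<noteq> j"
  shows "(arr c i j = 0 \<and> arr c j i = 0 \<longrightarrow>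
            ceg_eq mut arr c0 c c (twist mut c i @ twist mut c j) (twist mut c j @ twist mut c i))
       \<and> (arr c i j + arr c j i = 1 \<longrightarrow>
            ceg_eq mut arr c0 c c (twist mut c i @ twist mut c j @ twist mut c i)
                                  (twist mut c j @ twist mut c i @ twist mut c j))"
proof -
  interpret CS mut arr c0 using assms(1) by (rule CS.intro)
  show ?thesis
  proof (intro conjI impI)
    assume "arr c i j = 0 \<and> arr c j i = 0"
    then show "ceg_eq mut arr c0 c c (twist mut c i @ twist mut c j) (twist mut c j @ twist mut c i)"
      using commute assms(2-5) by blast
  next
    assume h: "arr c i j + arr c j i = 1"
    show "ceg_eq mut arr c0 c c (twist mut c i @ twist mut c j @ twist mut c i)
                                  (twist mut c j @ twist mut c i @ twist mut c j)"
    proof (cases "arr c i j = 0")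
      case True
      then show ?thesis using h braid assms(2-5) by simp
    next
      case False
      then have "arr c j i = 0" "arr c i j = 1" using h by auto
      then show ?thesis using braid[of c j i] assms(2-5) ceg_eq.sym by blast
    qed
  qed
qed

end
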